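(* For every $t\in\mathbb{R}$, the points $\mathbf R(t),\mathbf R(t+\tfrac13),\mathbf R(t+\tfrac23)$ are mutually orthogonal, and the closure of the open octant $$O(t):=\{\mathbf r\in S^2 : \mathbf r\cdot\mathbf R(t+s)>0 \text{ for all } s\in\{0,\tfrac13,\tfrac23\}\}$$ satisfies $\overline{O(t)}\subseteq A$.
   Context: For $t\in[-\tfrac12,0)$ define points of $S^2\subset\mathbb{R}^3$: $\mathbf r_1(t)=\big(\tfrac{1}{\sqrt2},\,t,\,\sqrt{\tfrac12-t^2}\big)$, $\mathbf r_2(t)=\Big(-\tfrac{\frac12+t}{1+t},\,\tfrac1{\sqrt2},\,\tfrac1{\sqrt2}\tfrac{\sqrt{\frac12-t^2}}{1+t}\Big)$, $\mathbf r_3(t)=\mathbf r_1(t)\times\mathbf r_2(t)=\Big(-\tfrac1{\sqrt2}\tfrac{\sqrt{\frac12-t^2}}{1+t},\,-\sqrt{\tfrac12-t^2},\,\tfrac{\frac12+t+t^2}{1+t}\Big)$. Let $R_{\pi/2}$ be the rotation $(x,y,z)\mapsto(-y,x,z)$ (by $\pi/2$ about the $z$-axis). Define $\mathbf r_0:[0,\tfrac14)\to S^2$ by $\mathbf r_0(t)=\mathbf r_1(6t-\tfrac12)$ for $t\in[0,\tfrac1{12})$, $\mathbf r_0(t)=R_{\pi/2}^3\mathbf r_2(6t-1)$ for $t\in[\tfrac1{12},\tfrac16)$, $\mathbf r_0(t)=R_{\pi/2}^2\mathbf r_3(6t-\tfrac32)$ for $t\in[\tfrac16,\tfrac14)$.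 Define $\mathbf R:[0,1)\to S^2$ by $\mathbf R(t)=R_{\pi/2}^k\,\mathbf r_0(t-\tfrac k4)$ for $t\in[\tfrac k4,\tfrac{k+1}4)$, $k=0,1,2,3$, and extend $\mathbf R$ to $\mathbb R$ periodically with period $1$: $\mathbf R(t):=\mathbf R(t-\lfloor t\rfloor)$. The image $\Gamma=\mathbf R(\mathbb R)$ is a closed curve on $S^2$; let $A\subseteq S^2$ be the closed region bounded by $\Gamma$ containing the north pole, i.e. $A=\Gamma\cup C$, where $C$ is the connected component of $S^2\setminus\Gamma$ containing $(0,0,1)$. *)

theory Defs
  imports "HOL-Analysis.Analysis"
begin

definition r1 :: "real \<Rightarrow> real^3" where
  "r1 t = vector [1 / sqrt 2, t, sqrt (1/2 - t^2)]"

definition r2 :: "real \<Rightarrow> real^3" where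
  "r2 t = vector [- ((1/2 + t) / (1 + t)), 1 / sqrt 2,
                  (1 / sqrt 2) * (sqrt (1/2 - t^2) / (1 + t))]"

definition r3 :: "real \<Rightarrow> real^3" where
  "r3 t = cross3 (r1 t) (r2 t)"

definition rotz :: "real^3 \<Rightarrow> real^3" where
  "rotz v = vector [- (v$2), v$1, v$3]"

definition r0 :: "real \<Rightarrow> real^3" where
  "r0 t = (if t < 1/12 then r1 (6*t - 1/2)
           else if t < 1/6 then (rotz ^^ 3) (r2 (6*t - 1))
           else (rotz ^^ 2) (r3 (6*t - 3/2)))"

definition Rc :: "real \<Rightarrow> real^3" where
  "Rc t = (let u = t - of_int \<lfloor>t\<rfloor>; k = nat \<lfloor>4 * u\<rfloor>
           in (rotz ^^ k) (r0 (u - real k / 4)))"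

definition Gamma :: "(real^3) set" where
  "Gamma = range Rc"

definition northpole :: "real^3" where
  "northpole = vector [0, 0, 1]"

definition regionA :: "(real^3) set" where
  "regionA = Gamma \<union> connected_component_set (sphere 0 1 - Gamma) northpole"

definition octant :: "real \<Rightarrow> (real^3) set" where
  "octant t = {r \<in> sphere 0 1. \<forall>s \<in> {0, 1/3, 2/3}. r \<bullet> Rc (t + s) > 0}"

end

theory Submission
  imports Defs
begin


lemma dot3: "(vector [a1,a2,a3] :: real^3) \<bullet> vector [b1,b2,b3] = a1* b1+a2* b2+a3* b3"
  by (simp add: inner_vec_def sum_3)

lemma rotz_vec: "rotz (vector [x,y,z]) = vector [-y,x,z]"
  by (simp add: rotz_def)

lemma vec_eta: "(v::real^3) = vector [v$1, v$2, v$3]"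
  by (simp add: vec_eq_iff vector_def forall_3)

lemma rotz_inner: "rotz u \<bullet> rotz v = u \<bullet> v"
  by (subst (3) vec_eta, subst (4) vec_eta) (simp add: rotz_def dot3)

lemma rotz_pow_inner: "(rotz^^n) u \<bullet> (rotz^^n) v = u \<bullet> v"
  by (induction n) (simp_all add: rotz_inner)

lemma rotz4: "rotz^^4 = id"
  by (rule ext, subst vec_eta) (simp add: rotz_def numeral_eq_Suc)

lemma rotz_pow_mod: "rotz^^n = rotz^^(n mod 4)"
proof -
  have k: "rotz^^(4* k) = id" for k
    by (induction k) (simp_all add: funpow_add rotz4)
  have "rotz^^n = rotz^^(n mod 4 + 4 * (n div 4))" by simp
  also have "\<dots> = rotz^^(n mod 4)" 
    by (simp only: funpow_add k) simp
  finally show ?thesis .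
qed

lemma rotz_pow_z: "((rotz^^n) v) $ 3 = v $ 3"
  by (induction n) (simp_all add: rotz_def)

lemma sq2: "(1/sqrt 2) * (1/sqrt 2) = (1/2::real)"
  by (simp add: divide_simps)

lemma r_explicit:
  fixes s :: real
  assumes "-1/2 \<le> s" "s < 0"
  defines "c \<equiv> 1/sqrt 2" and "a \<equiv> sqrt (1/2 - s^2)" and "i \<equiv> 1/(1+s)"
  shows "r1 s = vector [c, s, a]" "r2 s = vector [- ((1/2 + s) * i), c, c * a * i]"
    "r3 s = vector [- c * a * i, - a, (1/2 + s + s^2) * i]"
proof -
  have cc: "c* c = 1/2" unfolding c_def by (rule sq2)
  have D: "1 + s > 0" using assms by simp
  have ii: "i * (1+s) = 1" unfolding i_def using D by simp
  show e1: "r1 s = vector [c, s, a]" by (simp add: r1_def c_def a_def)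
  show e2: "r2 s = vector [- ((1/2 + s) * i), c, c * a * i]" by (simp add: r2_def c_def a_def i_def)
  show "r3 s = vector [- c * a * i, - a, (1/2 + s + s^2) * i]"
    unfolding r3_def e1 e2
    apply (simp add: cross3_def vec_eq_iff forall_3)
    using ii cc by algebra
qed

definition piece :: "nat \<Rightarrow> real \<Rightarrow> real^3" where
  "piece j s = (if j = 0 then r1 s else if j = 1 then (rotz^^3) (r2 s) else (rotz^^2) (r3 s))"

lemma Rc_eq:
  fixes w :: real and m :: nat and N :: int
  assumes w: "0 \<le> w" "w < 1/12" and m: "m < 12"
  shows "Rc (of_int N + real m/12 + w) = (rotz^^(m div 3)) (piece (m mod 3) (6* w - 1/2))"
proof -
  have md: "real m = 3 * real (m div 3) + real (m mod 3)"
    by (metis of_nat_add of_nat_mult mult_div_mod_eq of_nat_numeral)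
  have m3: "m mod 3 < 3" by simp
  have fl: "\<lfloor>of_int N + real m/12 + w\<rfloor> = N"
    using w m by (intro floor_unique) auto
  have fl2: "\<lfloor>4 * (real m/12 + w)\<rfloor> = int (m div 3)"
  proof (intro floor_unique)
    have e: "4 * (real m / 12 + w) = real (m div 3) + (real (m mod 3) + 12* w)/3"
      using md by (simp add: field_simps)
    have "real (m mod 3) \<le> 2" using m3 by linarith
    moreover have "0 \<le> real (m mod 3)" by simp
    ultimately show "real_of_int (int (m div 3)) \<le> 4 * (real m / 12 + w)"
      "4 * (real m / 12 + w) < real_of_int (int (m div 3)) + 1" 
      unfolding e using w by simp_all
  qed
  have arg: "real m/12 + w - real (m div 3)/4 = real (m mod 3)/12 + w"
    using md by (simp add: field_simps)
  show ?thesis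
    unfolding Rc_def Let_def fl
    using fl2 arg
  proof -
    have u: "of_int N + real m/12 + w - real_of_int N = real m/12 + w" by simp
    have "r0 (real (m mod 3)/12 + w) = piece (m mod 3) (6* w - 1/2)"
    proof -
      consider "m mod 3 = 0" | "m mod 3 = 1" | "m mod 3 = 2" using m3 by linarith
      then show ?thesis
      proof cases
        case 1 then show ?thesis using w by (simp add: r0_def piece_def)
      next
        case 2 then show ?thesis using w by (simp add: r0_def piece_def)
      next
        case 3 then show ?thesis using w by (simp add: r0_def piece_def)
      qed
    qed
    then show "(rotz ^^ nat \<lfloor>4 * (real_of_int N + real m / 12 + w - real_of_int N)\<rfloor>)
     (r0 (real_of_int N + real m / 12 + w - real_of_int N - real (nat \<lfloor>4 * (real_of_int N + real m / 12 + w - real_of_int N)\<rfloor>) / 4)) =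
    (rotz ^^ (m div 3)) (piece (m mod 3) (6 * w - 1 / 2))"
      unfolding u fl2 nat_int arg by simp
  qed
qed

lemma Rc_gen:
  fixes w :: real and m :: nat and N :: int
  assumes w: "0 \<le> w" "w < 1/12"
  shows "Rc (of_int N + real m/12 + w) = (rotz^^(m mod 12 div 3)) (piece (m mod 12 mod 3) (6* w - 1/2))"
proof -
  have "real m = 12 * real (m div 12) + real (m mod 12)"
    by (metis of_nat_add of_nat_mult mult_div_mod_eq of_nat_numeral)
  then have e: "of_int N + real m/12 + w = of_int (N + int (m div 12)) + real (m mod 12)/12 + w"
    by simp
  show ?thesis unfolding e by (rule Rc_eq[OF w]) simp
qed

lemma t_decomp:
  fixes t :: real
  obtains N :: int and m :: nat and w where "t = of_int N + real m/12 + w" "0 \<le> w" "w < 1/12" "m < 12"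
proof -
  define N where "N = \<lfloor>t\<rfloor>"
  define n where "n = \<lfloor>12 * (t - of_int N)\<rfloor>"
  have t0: "0 \<le> t - of_int N" "t - of_int N < 1" unfolding N_def by linarith+
  have n0: "0 \<le> n" unfolding n_def using t0 by simp
  have n1: "n < 12" unfolding n_def using t0 by (simp add: floor_less_iff)
  have n2: "of_int n \<le> 12 * (t - of_int N)" "12 * (t - of_int N) < of_int n + 1"
    unfolding n_def by linarith+
  define w where "w = t - of_int N - of_int n / 12"
  show ?thesis
  proof (rule that[of N "nat n" w])
    show "t = of_int N + real (nat n)/12 + w" unfolding w_def using n0 by simp
    show "0 \<le> w" "w < 1/12" unfolding w_def using n2 by simp_all
    show "nat n < 12" using n1 by simp
  qed
qed

lemma rotz_comp [simp]: "(rotz^^a) ((rotz^^b) x) = (rotz^^((a+b) mod 4)) x"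
  by (metis comp_apply funpow_add rotz_pow_mod)

lemma rotz_comp1 [simp]: "rotz ((rotz^^b) x) = (rotz^^((1+b) mod 4)) x"
  using rotz_comp[of 1 b x] by simp

lemma triple:
  fixes t :: real
  obtains k s where "-1/2 \<le> s" "s < 0"
    "(Rc t = (rotz^^k) (r1 s) \<and> Rc (t+1/3) = (rotz^^k) (r2 s) \<and> Rc (t+2/3) = (rotz^^k) (r3 s)) \<or>
     (Rc t = (rotz^^k) (r2 s) \<and> Rc (t+1/3) = (rotz^^k) (r3 s) \<and> Rc (t+2/3) = (rotz^^k) (r1 s)) \<or>
     (Rc t = (rotz^^k) (r3 s) \<and> Rc (t+1/3) = (rotz^^k) (r1 s) \<and> Rc (t+2/3) = (rotz^^k) (r2 s))"
proof -
  obtain N m w where t: "t = of_int N + real m/12 + w" and w: "0 \<le> w" "w < 1/12" and m: "m < 12"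
    by (rule t_decomp)
  have t1: "t + 1/3 = of_int N + real (m+4)/12 + w" using t by simp
  have t2: "t + 2/3 = of_int N + real (m+8)/12 + w" using t by simp
  define s where "s = 6* w - 1/2"
  have s: "-1/2 \<le> s" "s < 0" using w unfolding s_def by simp_all
  have R: "Rc t = (rotz^^(m mod 12 div 3)) (piece (m mod 12 mod 3) s)"
          "Rc (t+1/3) = (rotz^^((m+4) mod 12 div 3)) (piece ((m+4) mod 12 mod 3) s)"
          "Rc (t+2/3) = (rotz^^((m+8) mod 12 div 3)) (piece ((m+8) mod 12 mod 3) s)"
    unfolding t1 t2 unfolding t s_def by (rule Rc_gen[OF w])+
  have "m = 0 \<or> m = 1 \<or> m = 2 \<or> m = 3 \<or> m = 4 \<or> m = 5 \<or> m = 6 \<or> m = 7 \<or> m = 8 \<or> m = 9 \<or> m = 10 \<or> m = 11" using m by presburger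
  then have "\<exists>k. (Rc t = (rotz^^k) (r1 s) \<and> Rc (t+1/3) = (rotz^^k) (r2 s) \<and> Rc (t+2/3) = (rotz^^k) (r3 s)) \<or>
     (Rc t = (rotz^^k) (r2 s) \<and> Rc (t+1/3) = (rotz^^k) (r3 s) \<and> Rc (t+2/3) = (rotz^^k) (r1 s)) \<or>
     (Rc t = (rotz^^k) (r3 s) \<and> Rc (t+1/3) = (rotz^^k) (r1 s) \<and> Rc (t+2/3) = (rotz^^k) (r2 s))"
  proof (elim disjE)
    assume h: "m = 0" show ?thesis unfolding R h
      by (intro exI[of _ 0] disjI1) (simp add: piece_def)
  next
    assume h: "m = 1" show ?thesis unfolding R h
      by (intro exI[of _ 3] disjI2 disjI1) (simp add: piece_def)
  next
    assume h: "m = 2" show ?thesis unfolding R h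
      by (intro exI[of _ 2] disjI2 disjI2) (simp add: piece_def)
  next
    assume h: "m = 3" show ?thesis unfolding R h
      by (intro exI[of _ 1] disjI1) (simp add: piece_def)
  next
    assume h: "m = 4" show ?thesis unfolding R h
      by (intro exI[of _ 0] disjI2 disjI1) (simp add: piece_def)
  next
    assume h: "m = 5" show ?thesis unfolding R h
      by (intro exI[of _ 3] disjI2 disjI2) (simp add: piece_def)
  next
    assume h: "m = 6" show ?thesis unfolding R h
      by (intro exI[of _ 2] disjI1) (simp add: piece_def)
  next
    assume h: "m = 7" show ?thesis unfolding R h
      by (intro exI[of _ 1] disjI2 disjI1) (simp add: piece_def)
  next
    assume h: "m = 8" show ?thesis unfolding R h
      by (intro exI[of _ 0] disjI2 disjI2) (simp add: piece_def)
  next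
    assume h: "m = 9" show ?thesis unfolding R h
      by (intro exI[of _ 3] disjI1) (simp add: piece_def)
  next
    assume h: "m = 10" show ?thesis unfolding R h
      by (intro exI[of _ 2] disjI2 disjI1) (simp add: piece_def)
  next
    assume h: "m = 11" show ?thesis unfolding R h
      by (intro exI[of _ 1] disjI2 disjI2) (simp add: piece_def)
  qed
  then show ?thesis using that s by blast
qed



lemma sq_le: "(x::real)^2 \<le> y^2 \<Longrightarrow> 0 \<le> y \<Longrightarrow> x \<le> y"
  by (rule power2_le_imp_le)

lemma nn3: "0 \<le> (x::real) \<Longrightarrow> 0 \<le> y \<Longrightarrow> 0 \<le> z \<Longrightarrow> 0 \<le> x * y * z"
  by simp

lemma P0_ineq:
  fixes a s y z :: real
  assumes s: "-1/2 \<le> s" "s < 0" and a: "a * a = 1/2 - s * s" "a \<ge> 0"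
    and y: "y * y + z * z = 1/2" "z \<ge> 0" "-1/2 \<le> y" "y \<le> 1/2"
  shows "-(1/2+s) + y * (1+s) + z * a \<le> 0 \<or> -a/2 - a * y * (1+s) + z * (1/2+s+s^2) \<le> 0"
proof (cases "y \<le> s")
  case True
  have "(z * a + y * s)^2 + (z * s - y * a)^2 = (y * y + z * z) * (a * a + s * s)" by algebra
  then have id: "(z * a + y * s)^2 + (z * s - y * a)^2 = 1/4" using a y by simp
  have h2: "(1/2::real)^2 = 1/4" by (simp add: power2_eq_square)
  have "(z * a + y * s)^2 \<le> (1/2)^2" using id zero_le_power2[of "z * s - y * a"] unfolding h2 by linarith
  then have "z * a + y * s \<le> 1/2" by (rule sq_le) simp
  moreover have "y * (1+s) = y + y * s" by algebra
  ultimately show ?thesis using True by auto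
next
  case False
  define g where "g = 1/2+s+s^2"
  have g0: "g \<ge> 0" unfolding g_def using s by (simp add: power2_eq_square)
  define L where "L = (1/2 - s * s) * (1+s)^2 + g^2"
  have "(1/2 - s * s) * (1/2+y * (1+s))^2 - (1/2 - y * y) * g^2 = L * (y-s)^2 + 2 * g * (1/2+s) * (y-s)"
    unfolding L_def g_def by (simp add: field_simps power2_eq_square)
  moreover have "(a * (1/2+y * (1+s)))^2 = (1/2 - s * s) * (1/2+y * (1+s))^2"
    unfolding a(1)[symmetric] by (simp add: power2_eq_square algebra_simps)
  moreover have "(z * g)^2 = (1/2 - y * y) * g^2"
  proof -
    have zz: "1/2 - y * y = z * z" using y by linarith
    show ?thesis unfolding zz by algebra
  qed
  moreover have "0 \<le> L * (y-s)^2"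
  proof -
    have ss: "0 \<le> 1/2 - s * s" using a(1)[symmetric] by simp
    show ?thesis unfolding L_def using ss by (intro mult_nonneg_nonneg add_nonneg_nonneg) auto
  qed
  moreover have "0 \<le> 2 * g * (1/2+s) * (y-s)" using g0 s False by simp
  ultimately have "(z * g)^2 \<le> (a * (1/2+y * (1+s)))^2" by linarith
  moreover have "0 \<le> a * (1/2+y * (1+s))"
  proof -
    have "y * (1+s) \<ge> -1/2"
    proof (cases "y \<ge> 0")
      case True
      then have "0 \<le> y * (1+s)" using s by simp
      then show ?thesis by linarith
    next
      case False
      then have "y * (1+s) \<ge> y * 1" using s by (intro mult_left_mono_neg) auto
      then show ?thesis using y by simp
    qed
    then show ?thesis using a by simp
  qed
  ultimately have "z * g \<le> a * (1/2+y * (1+s))" by (rule sq_le)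
  then show ?thesis unfolding g_def by (simp add: algebra_simps)
qed


lemma nonneg_half: "a * a = 1/2 - s * s \<Longrightarrow> 0 \<le> 1/2 - (s::real) * s"
  using zero_le_square[of a] by linarith

lemma P1_ineq:
  fixes a c s y z :: real
  assumes c: "c * c = 1/2" "c > 0"
    and s: "-1/2 \<le> s" "s < 0" and a: "a * a = 1/2 - s * s" "a \<ge> 0"
    and y: "y * y + z * z = 1/2" "z \<ge> 0" "-1/2 \<le> y" "y \<le> 1/2"
  shows "c * (s - y) + z * a \<le> 0 \<or> c * a * y - c * a * (1+s) + z * (1/2+s+s^2) \<le> 0"
proof (cases "y * (1+s) \<le> 1/2+s")
  case True
  define g where "g = 1/2+s+s^2"
  have g0: "g \<ge> 0" unfolding g_def using s by (simp add: power2_eq_square)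
  define L where "L = (1/2 - s * s)/2 + g^2"
  define w where "w = y * (1+s) - (1/2+s)"
  have ss: "0 \<le> 1/2 - s * s" using a(1) by (rule nonneg_half)
  have id: "(1+s)^2 * ((1/2) * (1/2 - s * s) * (1+s-y)^2 - (1/2 - y * y) * g^2)
      = L * w^2 + 2 * s * (1+s)^2 * g * w"
    unfolding L_def g_def w_def by (simp add: field_simps power2_eq_square)
  have "0 \<le> (-s) * ((1+s)^2 * g) * (-w)" using s g0 True unfolding w_def by (intro nn3) auto
  moreover have "2 * s * (1+s)^2 * g * w = 2 * ((-s) * ((1+s)^2 * g) * (-w))" by algebra
  moreover have "0 \<le> L * w^2" unfolding L_def using ss by (intro mult_nonneg_nonneg add_nonneg_nonneg) auto
  ultimately have "0 \<le> (1+s)^2 * ((1/2) * (1/2 - s * s) * (1+s-y)^2 - (1/2 - y * y) * g^2)"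
    unfolding id by linarith
  moreover have "(1+s)^2 > 0" using s by simp
  ultimately have X: "0 \<le> (1/2) * (1/2 - s * s) * (1+s-y)^2 - (1/2 - y * y) * g^2"
    by (simp add: zero_le_mult_iff)
  have e1: "(c * a * (1+s-y))^2 = (1/2) * (1/2 - s * s) * (1+s-y)^2"
  proof -
    have "(c * a * (1+s-y))^2 = (c * c) * (a * a) * (1+s-y)^2" by (simp add: power2_eq_square algebra_simps)
    then show ?thesis unfolding a(1) c(1) .
  qed
  have zz: "1/2 - y * y = z * z" using y by linarith
  have e2: "(z * g)^2 = (1/2 - y * y) * g^2" unfolding zz by algebra
  have "(z * g)^2 \<le> (c * a * (1+s-y))^2" using X e1 e2 by linarith
  moreover have "0 \<le> c * a * (1+s-y)" using c a s y by simp
  ultimately have "z * g \<le> c * a * (1+s-y)" by (rule sq_le)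
  then show ?thesis unfolding g_def by (simp add: algebra_simps)
next
  case False
  define w where "w = y * (1+s) - (1/2+s)"
  have ss: "0 \<le> 1/2 - s * s" using a(1) by (rule nonneg_half)
  have y0: "0 \<le> y"
  proof (rule ccontr)
    assume "\<not> 0 \<le> y"
    then have "y * (1+s) < 0" using s by (simp add: mult_neg_pos)
    then show False using False s by simp
  qed
  have id: "(1+s)^2 * ((1/2) * (y-s)^2 - (1/2 - s * s) * (1/2 - y * y))
      = (1 - s * s) * w^2 + 2 * (1/2 - s * s) * (1+s) * w"
    unfolding w_def by (simp add: field_simps power2_eq_square)
  have "0 \<le> (1/2 - s * s) * (1+s) * w" using ss s False unfolding w_def by (intro nn3) auto
  moreover have "0 \<le> (1 - s * s) * w^2" using ss by simp
  ultimately have "0 \<le> (1+s)^2 * ((1/2) * (y-s)^2 - (1/2 - s * s) * (1/2 - y * y))"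
    unfolding id by linarith
  moreover have "(1+s)^2 > 0" using s by simp
  ultimately have X: "0 \<le> (1/2) * (y-s)^2 - (1/2 - s * s) * (1/2 - y * y)"
    by (simp add: zero_le_mult_iff)
  have e1: "(c * (y-s))^2 = (1/2) * (y-s)^2"
  proof -
    have "(c * (y-s))^2 = (c * c) * (y-s)^2" by (simp add: power2_eq_square algebra_simps)
    then show ?thesis unfolding c(1) .
  qed
  have zz: "1/2 - y * y = z * z" using y by linarith
  have e2: "(z * a)^2 = (1/2 - s * s) * (1/2 - y * y)" unfolding zz a(1)[symmetric] by (simp add: power2_eq_square algebra_simps)
  have "(z * a)^2 \<le> (c * (y-s))^2" using X e1 e2 by linarith
  moreover have "0 \<le> c * (y-s)" using c s y0 by simp
  ultimately have "z * a \<le> c * (y-s)" by (rule sq_le)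
  then show ?thesis by (simp add: algebra_simps)
qed

lemma P2_ineq:
  fixes a s y z :: real
  assumes a: "a * a = 1/2 - s * s"
    and y: "y * y + z * z = 1/2"
  shows "-1/2 - y * s + z * a \<le> 0"
proof -
  have "(z * a - y * s)^2 + (z * s + y * a)^2 = (y * y + z * z) * (a * a + s * s)" by algebra
  then have id: "(z * a - y * s)^2 + (z * s + y * a)^2 = 1/4" using a y by simp
  have h2: "(1/2::real)^2 = 1/4" by (simp add: power2_eq_square)
  have "(z * a - y * s)^2 \<le> (1/2)^2" using id zero_le_power2[of "z * s + y * a"] unfolding h2 by linarith
  then have "z * a - y * s \<le> 1/2" by (rule sq_le) simp
  then show ?thesis by simp
qed

lemma P3_ineq:
  fixes a c s y z :: real
  assumes c: "c * c = 1/2" "c > 0"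
    and s: "-1/2 \<le> s" "s < 0" and a: "a * a = 1/2 - s * s" "a \<ge> 0"
    and y: "y * y + z * z = 1/2" "z \<ge> 0" "-1/2 \<le> y" "y \<le> 1/2"
  shows "-y * (1/2+s) - (1+s)/2 + c * z * a \<le> 0"
proof -
  define R where "R = (1+s)/2 + y * (1/2+s)"
  define Y where "Y = y * (1/2+s)"
  have "Y \<ge> (-1/2) * (1/2+s)" unfolding Y_def using y s by (intro mult_right_mono) auto
  moreover have "(-1/2) * (1/2+s) = -1/4 - s/2" by (simp add: field_simps)
  ultimately have R0: "R \<ge> 0" unfolding R_def Y_def[symmetric] using s by (simp add: field_simps)
  have id: "R^2 - (1/2) * (1/2 - s * s) * (1/2 - y * y) = (1/8) * (1 + 2 * s * y + 2 * (s + y))^2"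
    unfolding R_def by (simp add: field_simps power2_eq_square)
  have zz: "1/2 - y * y = z * z" using y by linarith
  have e: "(c * z * a)^2 = (1/2) * (1/2 - s * s) * (1/2 - y * y)"
  proof -
    have "(c * z * a)^2 = (c * c) * (a * a) * (z * z)" by (simp add: power2_eq_square algebra_simps)
    then show ?thesis unfolding a(1) c(1) zz by simp
  qed
  have "(c * z * a)^2 \<le> R^2" using id e zero_le_power2[of "1 + 2 * s * y + 2 * (s + y)"] by linarith
  then have "c * z * a \<le> R" using R0 by (rule sq_le)
  then show ?thesis unfolding R_def by simp
qed

lemma g_le:
  fixes a s :: real
  assumes s: "-1/2 \<le> s" "s < 0" and a: "a * a = 1/2 - s * s" "a \<ge> 0"
  shows "1/2+s+s^2 \<le> a * (1+s)"
proof -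
  have id: "(1/2 - s * s) * (1+s)^2 - (1/2+s+s^2)^2 = (s+1/2) * (1/2 - s * ((2* s+1) * (s+1)))" by (simp add: field_simps power2_eq_square)
  have "s * ((2* s+1) * (s+1)) \<le> 0" using s by (intro mult_nonpos_nonneg) auto
  then have "0 \<le> (s+1/2) * (1/2 - s * ((2* s+1) * (s+1)))" using s by simp
  moreover have "(a * (1+s))^2 = (1/2 - s * s) * (1+s)^2" unfolding a(1)[symmetric] by (simp add: power2_eq_square algebra_simps)
  ultimately have "(1/2+s+s^2)^2 \<le> (a * (1+s))^2" using id by linarith
  moreover have "0 \<le> a * (1+s)" using a s by simp
  ultimately show ?thesis by (rule sq_le)
qed

lemma h_le:
  fixes b c u :: real
  assumes c: "c * c = 1/2" "c > 0" and u: "-1/2 \<le> u" "u < 0" and b: "b * b = 1/2 - u * u" "b \<ge> 0"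
  shows "1/2+u+u^2 \<le> c * b"
proof -
  have id: "(1/2) * (1/2 - u * u) - (1/2+u+u^2)^2 = (-u) * ((1+2* u) * (1+u/2) + u * u * (1+u))" by (simp add: field_simps power2_eq_square)
  have "0 \<le> (1+2* u) * (1+u/2)" using u by simp
  moreover have "0 \<le> u * u * (1+u)" using u by simp
  ultimately have "0 \<le> (1+2* u) * (1+u/2) + u * u * (1+u)" by simp
  then have "0 \<le> (-u) * ((1+2* u) * (1+u/2) + u * u * (1+u))" using u by (intro mult_nonneg_nonneg) auto
  moreover have "(c * b)^2 = (1/2) * (1/2 - u * u)"
  proof -
    have "(c * b)^2 = (c * c) * (b * b)" by (simp add: power2_eq_square algebra_simps)
    then show ?thesis unfolding b(1) c(1) .
  qed
  ultimately have "(1/2+u+u^2)^2 \<le> (c * b)^2" using id by linarith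
  moreover have "0 \<le> c * b" using b c by simp
  ultimately show ?thesis by (rule sq_le)
qed

lemma gpos: "-1/2 \<le> (s::real) \<Longrightarrow> s < 0 \<Longrightarrow> 0 \<le> 1/2+s+s^2"
  by (simp add: power2_eq_square)

lemma Q0_ineq:
  fixes a b s u :: real
  assumes s: "-1/2 \<le> s" "s < 0" and a: "a * a = 1/2 - s * s" "a \<ge> 0"
    and u: "-1/2 \<le> u" "u < 0" and b: "b * b = 1/2 - u * u" "b \<ge> 0"
  shows "-a * b/2 - a * b * (1+s) * (1+u) + (1/2+s+s^2) * (1/2+u+u^2) \<le> 0"
proof -
  have "(1/2+s+s^2) * (1/2+u+u^2) \<le> (a * (1+s)) * (b * (1+u))"
    using g_le[OF s a] g_le[OF u b] gpos[OF s] gpos[OF u] a b s u by (intro mult_mono) auto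
  moreover have "0 \<le> a * b" using a b by simp
  ultimately show ?thesis by (simp add: algebra_simps)
qed

lemma Q1_ineq:
  fixes a b c s u :: real
  assumes c: "c * c = 1/2" "c > 0" and s: "-1/2 \<le> s" "s < 0" and a: "a * a = 1/2 - s * s" "a \<ge> 0"
    and u: "-1/2 \<le> u" "u < 0" and b: "b * b = 1/2 - u * u" "b \<ge> 0"
  shows "-c * b * (1+u-s) + (1/2+u+u^2) * a \<le> 0"
proof -
  have "a * a \<le> c * c" using a(1) c(1) zero_le_square[of s] by linarith
  then have "a^2 \<le> c^2" by (simp add: power2_eq_square)
  moreover have "0 \<le> c" using c by simp
  ultimately have ac: "a \<le> c" by (rule sq_le)
  have "(1/2+u+u^2) * a \<le> (b * (1+u)) * a" using g_le[OF u b] a by (intro mult_right_mono) auto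
  also have "\<dots> \<le> (b * (1+u)) * c" using ac b u by (intro mult_left_mono) auto
  also have "\<dots> \<le> c * b * (1+u-s)"
  proof -
    have "0 \<le> c * b * (-s)" using c b s by (intro mult_nonneg_nonneg) auto
    then show ?thesis by (simp add: algebra_simps)
  qed
  finally show ?thesis by simp
qed

lemma Q3_ineq:
  fixes a b c s u :: real
  assumes c: "c * c = 1/2" "c > 0" and s: "-1/2 \<le> s" "s < 0" and a: "a * a = 1/2 - s * s" "a \<ge> 0"
    and u: "-1/2 \<le> u" "u < 0" and b: "b * b = 1/2 - u * u" "b \<ge> 0"
  shows "-b * (1/2+s) * (1+u) - b * (1+s)/2 + c * a * (1/2+u+u^2) \<le> 0"
proof -
  have "a^2 \<le> (1+s)^2"
  proof -
    have "(1+s)^2 - a^2 = 2 * (s+1/2)^2" unfolding power2_eq_square a(1) by (simp add: field_simps power2_eq_square)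
    then show ?thesis using zero_le_power2[of "s+1/2"] by linarith
  qed
  moreover have "0 \<le> 1+s" using s by simp
  ultimately have aD: "a \<le> 1+s" by (rule sq_le)
  have "c * a * (1/2+u+u^2) \<le> c * a * (c * b)" using h_le[OF c u b] a c by (intro mult_left_mono) auto
  also have "\<dots> = a * b / 2" using c by (simp add: algebra_simps)
  also have "\<dots> \<le> b * (1+s) / 2" using mult_right_mono[OF aD b(2)] by (simp add: mult.commute)
  finally have X: "c * a * (1/2+u+u^2) \<le> b * (1+s) / 2" .
  have "0 \<le> b * (1/2+s) * (1+u)" using b s u by simp
  moreover have "-b * (1/2+s) * (1+u) = -(b * (1/2+s) * (1+u))" by simp
  ultimately show ?thesis using X by linarith
qed

lemma Q2_ineq:
  fixes a b s u :: real
  assumes s: "-1/2 \<le> s" "s < 0" and a: "a * a = 1/2 - s * s" "a \<ge> 0"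
    and u: "-1/2 \<le> u" "u < 0" and b: "b * b = 1/2 - u * u" "b \<ge> 0"
  shows "-b/2 - b * s * (1+u) + (1/2+u+u^2) * a \<le> 0 \<or> b * (1/2+s) - b * (1+s) * (1+u) + (1/2+u+u^2) * a \<le> 0"
proof -
  define h where "h = 1/2+u+u^2"
  have h0: "0 \<le> h" unfolding h_def using gpos[OF u] .
  have uu: "0 \<le> 1/2 - u * u" using b(1) by (rule nonneg_half)
  have ha: "(h * a)^2 = (1/2 - s * s) * h^2" unfolding a(1)[symmetric] by (simp add: power2_eq_square algebra_simps)
  show ?thesis
  proof (cases "u \<le> s")
    case True
    define L where "L = (1/2 - u * u) * (1+u)^2 + h^2"
    have id: "(1/2 - u * u) * (1/2 + s * (1+u))^2 - (1/2 - s * s) * h^2 = L * (s-u)^2 + 2 * h * (1/2+u) * (s-u)"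
      unfolding L_def h_def by (simp add: field_simps power2_eq_square)
    have "0 \<le> L * (s-u)^2" unfolding L_def using uu by (intro mult_nonneg_nonneg add_nonneg_nonneg) auto
    moreover have "0 \<le> 2 * h * (1/2+u) * (s-u)" using h0 u True by simp
    moreover have "(b * (1/2 + s * (1+u)))^2 = (1/2 - u * u) * (1/2 + s * (1+u))^2" unfolding b(1)[symmetric] by (simp add: power2_eq_square algebra_simps)
    ultimately have "(h * a)^2 \<le> (b * (1/2 + s * (1+u)))^2" using id ha by linarith
    moreover have "0 \<le> b * (1/2 + s * (1+u))"
    proof -
      have "s * (1+u) \<ge> s * 1" using s u by (intro mult_left_mono_neg) auto
      then have "0 \<le> 1/2 + s * (1+u)" using s by linarith
      then show ?thesis using b by simp
    qed
    ultimately have "h * a \<le> b * (1/2 + s * (1+u))" by (rule sq_le)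
    then show ?thesis unfolding h_def by (simp add: algebra_simps)
  next
    case False
    define L where "L = (1/2 - u * u) * u^2 + h^2"
    have id: "(1/2 - u * u) * (1/2 + u * (1+s))^2 - (1/2 - s * s) * h^2 = L * (s-u)^2 + 2 * u * h * (1+u) * (s-u)"
      unfolding L_def h_def by (simp add: field_simps power2_eq_square)
    have "0 \<le> L * (s-u)^2" unfolding L_def using uu by (intro mult_nonneg_nonneg add_nonneg_nonneg) auto
    moreover have "0 \<le> (-u) * (h * (1+u)) * (-(s-u))" using h0 u False by (intro nn3) auto
    moreover have "2 * u * h * (1+u) * (s-u) = 2 * ((-u) * (h * (1+u)) * (-(s-u)))" by algebra
    moreover have "(b * (1/2 + u * (1+s)))^2 = (1/2 - u * u) * (1/2 + u * (1+s))^2" unfolding b(1)[symmetric] by (simp add: power2_eq_square algebra_simps)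
    ultimately have "(h * a)^2 \<le> (b * (1/2 + u * (1+s)))^2" using id ha by linarith
    moreover have "0 \<le> b * (1/2 + u * (1+s))"
    proof -
      have "u * (1+s) \<ge> u * 1" using s u by (intro mult_left_mono_neg) auto
      then have "0 \<le> 1/2 + u * (1+s)" using u by linarith
      then show ?thesis using b by simp
    qed
    ultimately have "h * a \<le> b * (1/2 + u * (1+s))" by (rule sq_le)
    then show ?thesis unfolding h_def by (simp add: algebra_simps)
  qed
qed



lemma rotz_pow0: "(rotz^^0) v = v" by simp
lemma rotz_pow1: "(rotz^^1) (vector [x,y,z]) = vector [-y,x,z]"
  by (simp add: rotz_vec)
lemma rotz_pow2: "(rotz^^2) (vector [x,y,z]) = vector [-x,-y,z]"
  by (simp add: eval_nat_numeral rotz_vec)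
lemma rotz_pow3: "(rotz^^3) (vector [x,y,z]) = vector [y,-x,z]"
  by (simp add: eval_nat_numeral rotz_vec)

lemma cc_fact: "(1/sqrt 2) * (1/sqrt 2) = (1/2::real)" "1/sqrt 2 > (0::real)"
  by (simp_all add: sq2)

lemma a_fact: "-1/2 \<le> s \<Longrightarrow> s < 0 \<Longrightarrow> sqrt (1/2 - s^2) * sqrt (1/2 - s^2) = 1/2 - s * s \<and> sqrt (1/2 - s^2) \<ge> 0"
proof -
  assume s: "-1/2 \<le> s" "s < 0"
  have "s^2 \<le> 1/4"
  proof -
    have "s^2 = (-s)^2" by simp
    also have "\<dots> \<le> (1/2)^2" using s by (intro power_mono) auto
    finally show ?thesis by (simp add: power2_eq_square)
  qed
  then have "0 \<le> 1/2 - s^2" by simp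
  then show ?thesis by (simp add: power2_eq_square)
qed

lemma P_out:
  fixes s y z :: real
  assumes s: "-1/2 \<le> s" "s < 0"
    and y: "y * y + z * z = 1/2" "z \<ge> 0" "-1/2 \<le> y" "y \<le> 1/2"
  shows "\<not> (0 < (rotz^^j) (vector [1/sqrt 2, y, z]) \<bullet> r1 s \<and> 0 < (rotz^^j) (vector [1/sqrt 2, y, z]) \<bullet> r2 s
            \<and> 0 < (rotz^^j) (vector [1/sqrt 2, y, z]) \<bullet> r3 s)"
proof -
  define c where "c = 1/sqrt (2::real)"
  define a where "a = sqrt (1/2 - s^2)"
  define i where "i = 1/(1+s)"
  have c: "c * c = 1/2" "c > 0" unfolding c_def using cc_fact by auto
  have a: "a * a = 1/2 - s * s" "a \<ge> 0" unfolding a_def using a_fact[OF s] by auto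
  have D: "1 + s > 0" using s by simp
  have i: "i > 0" unfolding i_def using D by simp
  have ii: "i * (1+s) = 1" unfolding i_def using D by simp
  have ci: "0 \<le> c * i" using c i by simp
  have R: "r1 s = vector [c, s, a]" "r2 s = vector [- ((1/2 + s) * i), c, c * a * i]"
    "r3 s = vector [- c * a * i, - a, (1/2 + s + s^2) * i]"
    using r_explicit[OF s] unfolding c_def a_def i_def by auto
  have j4: "j mod 4 = 0 \<or> j mod 4 = 1 \<or> j mod 4 = 2 \<or> j mod 4 = 3" by presburger
  show ?thesis
    using j4 unfolding rotz_pow_mod[of j] c_def[symmetric] R
  proof (elim disjE)
    assume j: "j mod 4 = 0"
    have e2: "(vector [c, y, z] :: real^3) \<bullet> vector [- ((1/2 + s) * i), c, c * a * i] = (c * i) * (-(1/2+s) + y * (1+s) + z * a)"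
      unfolding dot3 using ii c(1) by algebra
    have e3: "(vector [c, y, z] :: real^3) \<bullet> vector [- c * a * i, - a, (1/2 + s + s^2) * i] = i * (-a/2 - a * y * (1+s) + z * (1/2+s+s^2))"
      unfolding dot3 using ii c(1) by algebra
    show "\<not> (0 < (rotz ^^ (j mod 4)) (vector [c, y, z]) \<bullet> vector [c, s, a] \<and>
        0 < (rotz ^^ (j mod 4)) (vector [c, y, z]) \<bullet> vector [- ((1 / 2 + s) * i), c, c * a * i] \<and>
        0 < (rotz ^^ (j mod 4)) (vector [c, y, z]) \<bullet> vector [- c * a * i, - a, (1 / 2 + s + s\<^sup>2) * i])"
      using P0_ineq[OF s a y] mult_nonneg_nonpos[OF ci] mult_nonneg_nonpos[of i] i
      unfolding j rotz_pow0 e2 e3 by (smt (verit))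
  next
    assume j: "j mod 4 = 1"
    have e1: "(vector [-y, c, z] :: real^3) \<bullet> vector [c, s, a] = c * (s - y) + z * a"
      unfolding dot3 by (simp add: algebra_simps)
    have e3: "(vector [-y, c, z] :: real^3) \<bullet> vector [- c * a * i, - a, (1/2 + s + s^2) * i] = i * (c * a * y - c * a * (1+s) + z * (1/2+s+s^2))"
      unfolding dot3 using ii c(1) by algebra
    show "\<not> (0 < (rotz ^^ (j mod 4)) (vector [c, y, z]) \<bullet> vector [c, s, a] \<and>
        0 < (rotz ^^ (j mod 4)) (vector [c, y, z]) \<bullet> vector [- ((1 / 2 + s) * i), c, c * a * i] \<and>
        0 < (rotz ^^ (j mod 4)) (vector [c, y, z]) \<bullet> vector [- c * a * i, - a, (1 / 2 + s + s\<^sup>2) * i])"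
      using P1_ineq[OF c s a y] mult_nonneg_nonpos[of i] i
      unfolding j rotz_pow1 e1 e3 by (smt (verit))
  next
    assume j: "j mod 4 = 2"
    have e1: "(vector [-c, -y, z] :: real^3) \<bullet> vector [c, s, a] = -1/2 - y * s + z * a"
      unfolding dot3 using c by (simp add: algebra_simps)
    show "\<not> (0 < (rotz ^^ (j mod 4)) (vector [c, y, z]) \<bullet> vector [c, s, a] \<and>
        0 < (rotz ^^ (j mod 4)) (vector [c, y, z]) \<bullet> vector [- ((1 / 2 + s) * i), c, c * a * i] \<and>
        0 < (rotz ^^ (j mod 4)) (vector [c, y, z]) \<bullet> vector [- c * a * i, - a, (1 / 2 + s + s\<^sup>2) * i])"
      unfolding j rotz_pow2 using P2_ineq[OF a(1) y(1)] e1 by auto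
  next
    assume j: "j mod 4 = 3"
    have e2: "(vector [y, -c, z] :: real^3) \<bullet> vector [- ((1/2 + s) * i), c, c * a * i] = i * (-y * (1/2+s) - (1+s)/2 + c * z * a)"
      unfolding dot3 using ii c(1) by algebra
    show "\<not> (0 < (rotz ^^ (j mod 4)) (vector [c, y, z]) \<bullet> vector [c, s, a] \<and>
        0 < (rotz ^^ (j mod 4)) (vector [c, y, z]) \<bullet> vector [- ((1 / 2 + s) * i), c, c * a * i] \<and>
        0 < (rotz ^^ (j mod 4)) (vector [c, y, z]) \<bullet> vector [- c * a * i, - a, (1 / 2 + s + s\<^sup>2) * i])"
      using P3_ineq[OF c s a y] mult_nonneg_nonpos[of i] i
      unfolding j rotz_pow3 e2 by (smt (verit))
  qed
qed

lemma Q_out: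
  fixes s u b k :: real
  assumes s: "-1/2 \<le> s" "s < 0" and u: "-1/2 \<le> u" "u < 0"
    and b: "b * b = 1/2 - u * u" "b \<ge> 0" and kk: "k * (1+u) = 1"
  shows "\<not> (0 < (rotz^^j) (vector [1/sqrt 2 * b * k, b, (1/2+u+u^2) * k]) \<bullet> r1 s
          \<and> 0 < (rotz^^j) (vector [1/sqrt 2 * b * k, b, (1/2+u+u^2) * k]) \<bullet> r2 s
          \<and> 0 < (rotz^^j) (vector [1/sqrt 2 * b * k, b, (1/2+u+u^2) * k]) \<bullet> r3 s)"
proof -
  define c where "c = 1/sqrt (2::real)"
  define a where "a = sqrt (1/2 - s^2)"
  define i where "i = 1/(1+s)"
  define h where "h = 1/2+u+u^2"
  have c: "c * c = 1/2" "c > 0" unfolding c_def using cc_fact by auto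
  have a: "a * a = 1/2 - s * s" "a \<ge> 0" unfolding a_def using a_fact[OF s] by auto
  have D: "1 + s > 0" using s by simp
  have i: "i > 0" unfolding i_def using D by simp
  have ii: "i * (1+s) = 1" unfolding i_def using D by simp
  have k: "k > 0"
  proof -
    have "0 < k * (1+u)" using kk by simp
    then show ?thesis using zero_less_mult_iff[of k "1+u"] u by auto
  qed
  have ci: "0 \<le> c * i" using c i by simp
  have ik: "0 \<le> i * k" using k i by simp
  have cik: "0 \<le> c * i * k" using c k i by simp
  have R: "r1 s = vector [c, s, a]" "r2 s = vector [- ((1/2 + s) * i), c, c * a * i]"
    "r3 s = vector [- c * a * i, - a, (1/2 + s + s^2) * i]"
    using r_explicit[OF s] unfolding c_def a_def i_def by auto
  have j4: "j mod 4 = 0 \<or> j mod 4 = 1 \<or> j mod 4 = 2 \<or> j mod 4 = 3" by presburger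
  show ?thesis
    using j4 unfolding rotz_pow_mod[of j] c_def[symmetric] h_def[symmetric] R
  proof (elim disjE)
    assume j: "j mod 4 = 0"
    have e3: "(vector [c * b * k, b, h * k] :: real^3) \<bullet> vector [- c * a * i, - a, (1/2 + s + s^2) * i]
       = (i * k) * (-a * b/2 - a * b * (1+s) * (1+u) + (1/2+s+s^2) * h)"
      unfolding dot3 using ii kk c(1) by algebra
    show "\<not> (0 < (rotz ^^ (j mod 4)) (vector [c * b * k, b, h * k]) \<bullet> vector [c, s, a] \<and>
        0 < (rotz ^^ (j mod 4)) (vector [c * b * k, b, h * k]) \<bullet> vector [- ((1 / 2 + s) * i), c, c * a * i] \<and>
        0 < (rotz ^^ (j mod 4)) (vector [c * b * k, b, h * k]) \<bullet> vector [- c * a * i, - a, (1 / 2 + s + s\<^sup>2) * i])"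
      using mult_nonneg_nonpos[OF ik Q0_ineq[OF s a u b, folded h_def]]
      unfolding j rotz_pow0 e3 by linarith
  next
    assume j: "j mod 4 = 1"
    have e1: "(vector [-b, c * b * k, h * k] :: real^3) \<bullet> vector [c, s, a] = k * (-c * b * (1+u-s) + h * a)"
      unfolding dot3 using kk by algebra
    show "\<not> (0 < (rotz ^^ (j mod 4)) (vector [c * b * k, b, h * k]) \<bullet> vector [c, s, a] \<and>
        0 < (rotz ^^ (j mod 4)) (vector [c * b * k, b, h * k]) \<bullet> vector [- ((1 / 2 + s) * i), c, c * a * i] \<and>
        0 < (rotz ^^ (j mod 4)) (vector [c * b * k, b, h * k]) \<bullet> vector [- c * a * i, - a, (1 / 2 + s + s\<^sup>2) * i])"
      using mult_nonneg_nonpos[OF less_imp_le[OF k] Q1_ineq[OF c s a u b, folded h_def]]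
      unfolding j rotz_pow1 e1 by linarith
  next
    assume j: "j mod 4 = 2"
    have e1: "(vector [- (c * b * k), - b, h * k] :: real^3) \<bullet> vector [c, s, a] = k * (-b/2 - b * s * (1+u) + h * a)"
      unfolding dot3 using kk c(1) by algebra
    have e2: "(vector [- (c * b * k), - b, h * k] :: real^3) \<bullet> vector [- ((1/2 + s) * i), c, c * a * i]
       = (c * i * k) * (b * (1/2+s) - b * (1+s) * (1+u) + h * a)"
      unfolding dot3 using kk ii by algebra
    show "\<not> (0 < (rotz ^^ (j mod 4)) (vector [c * b * k, b, h * k]) \<bullet> vector [c, s, a] \<and>
        0 < (rotz ^^ (j mod 4)) (vector [c * b * k, b, h * k]) \<bullet> vector [- ((1 / 2 + s) * i), c, c * a * i] \<and>
        0 < (rotz ^^ (j mod 4)) (vector [c * b * k, b, h * k]) \<bullet> vector [- c * a * i, - a, (1 / 2 + s + s\<^sup>2) * i])"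
      using Q2_ineq[OF s a u b, folded h_def] mult_nonneg_nonpos[OF less_imp_le[OF k]] mult_nonneg_nonpos[OF cik]
      unfolding j rotz_pow2 e1 e2 by (metis linorder_not_le)
  next
    assume j: "j mod 4 = 3"
    have e2: "(vector [b, - (c * b * k), h * k] :: real^3) \<bullet> vector [- ((1/2 + s) * i), c, c * a * i]
       = (i * k) * (-b * (1/2+s) * (1+u) - b * (1+s)/2 + c * a * h)"
      unfolding dot3 using kk ii c(1) by algebra
    show "\<not> (0 < (rotz ^^ (j mod 4)) (vector [c * b * k, b, h * k]) \<bullet> vector [c, s, a] \<and>
        0 < (rotz ^^ (j mod 4)) (vector [c * b * k, b, h * k]) \<bullet> vector [- ((1 / 2 + s) * i), c, c * a * i] \<and>
        0 < (rotz ^^ (j mod 4)) (vector [c * b * k, b, h * k]) \<bullet> vector [- c * a * i, - a, (1 / 2 + s + s\<^sup>2) * i])"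
      using mult_nonneg_nonpos[OF ik Q3_ineq[OF c s a u b, folded h_def]]
      unfolding j rotz_pow3 e2 by linarith
  qed
qed



lemma arc_out:
  fixes s s' :: real
  assumes s: "-1/2 \<le> s" "s < 0" and s': "-1/2 \<le> s'" "s' < 0"
    and v: "v = r1 s' \<or> v = r2 s' \<or> v = r3 s'"
  shows "\<not> (0 < (rotz^^j) v \<bullet> r1 s \<and> 0 < (rotz^^j) v \<bullet> r2 s \<and> 0 < (rotz^^j) v \<bullet> r3 s)"
proof -
  define c where "c = 1/sqrt (2::real)"
  define a where "a = sqrt (1/2 - s'^2)"
  define i where "i = 1/(1+s')"
  have c: "c * c = 1/2" "c > 0" unfolding c_def using cc_fact by auto
  have a: "a * a = 1/2 - s' * s'" "a \<ge> 0" unfolding a_def using a_fact[OF s'] by auto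
  have D: "1 + s' > 0" using s' by simp
  have i: "i > 0" unfolding i_def using D by simp
  have ii: "i * (1+s') = 1" unfolding i_def using D by simp
  have R: "r1 s' = vector [c, s', a]" "r2 s' = vector [- ((1/2 + s') * i), c, c * a * i]"
    "r3 s' = vector [- c * a * i, - a, (1/2 + s' + s'^2) * i]"
    using r_explicit[OF s'] unfolding c_def a_def i_def by auto
  from v show ?thesis
  proof (elim disjE)
    assume v: "v = r1 s'"
    have "s' * s' + a * a = 1/2" using a by simp
    moreover have "s' \<le> 1/2" using s' by simp
    ultimately show ?thesis unfolding v R(1) c_def using P_out[OF s, of s' a j] a s' by simp
  next
    assume v: "v = r2 s'"
    have e: "vector [- ((1/2 + s') * i), c, c * a * i] = rotz (vector [c, (1/2 + s') * i, c * a * i])"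
      by (simp add: rotz_vec)
    have y1: "((1/2 + s') * i) * ((1/2 + s') * i) + (c * a * i) * (c * a * i) = 1/2"
      using ii c(1) a(1) by algebra
    have y2: "0 \<le> (1/2 + s') * i" using s' i by simp
    have y3: "(1/2 + s') * i \<le> 1/2"
    proof -
      have "(1/2 + s') * i = (1/2 + s') / (1+s')" unfolding i_def by simp
      also have "\<dots> \<le> 1/2" using D s' by (simp add: divide_le_eq)
      finally show ?thesis .
    qed
    have z: "0 \<le> c * a * i" using c a i by simp
    have "(rotz^^j) v = (rotz^^(Suc j)) (vector [c, (1/2 + s') * i, c * a * i])"
      unfolding v R(2) e funpow_Suc_right by simp
    then show ?thesis
      using P_out[OF s y1 z _ y3, of "Suc j"] y2 unfolding c_def by simp
  next
    assume v: "v = r3 s'"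
    have e: "vector [- c * a * i, - a, (1/2 + s' + s'^2) * i] = (rotz^^2) (vector [c * a * i, a, (1/2 + s' + s'^2) * i])"
      by (simp add: rotz_pow2)
    have "(rotz^^j) v = (rotz^^(j+2)) (vector [c * a * i, a, (1/2 + s' + s'^2) * i])"
      unfolding v R(3) e funpow_add by simp
    then show ?thesis
      using Q_out[OF s s' a ii, of "j+2"] unfolding c_def by simp
  qed
qed

lemma inner_shift: "(rotz^^m) v \<bullet> (rotz^^k) w = (rotz^^(m+3* k)) v \<bullet> w"
proof -
  have eq: "(k + (m + 3* k) mod 4) mod 4 = m mod 4" by presburger
  have "(rotz^^k) ((rotz^^(m+3* k)) v) = (rotz^^(m mod 4)) v" using eq by simp
  also have "\<dots> = (rotz^^m) v" using rotz_pow_mod[of m] by simp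
  finally have e: "(rotz^^m) v = (rotz^^k) ((rotz^^(m+3* k)) v)" by simp
  show ?thesis by (subst e) (rule rotz_pow_inner)
qed

lemma orth:
  assumes s: "-1/2 \<le> s" "s < 0"
  shows "r1 s \<bullet> r2 s = 0" "r1 s \<bullet> r3 s = 0" "r2 s \<bullet> r3 s = 0"
proof -
  define c where "c = 1/sqrt (2::real)"
  define a where "a = sqrt (1/2 - s^2)"
  define i where "i = 1/(1+s)"
  have c: "c * c = 1/2" "c > 0" unfolding c_def using cc_fact by auto
  have a: "a * a = 1/2 - s * s" "a \<ge> 0" unfolding a_def using a_fact[OF s] by auto
  have D: "1 + s > 0" using s by simp
  have ii: "i * (1+s) = 1" unfolding i_def using D by simp
  have R: "r1 s = vector [c, s, a]" "r2 s = vector [- ((1/2 + s) * i), c, c * a * i]"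
    using r_explicit[OF s] unfolding c_def a_def i_def by auto
  show "r1 s \<bullet> r2 s = 0" unfolding R dot3 using ii a(1) by algebra
  show "r1 s \<bullet> r3 s = 0" "r2 s \<bullet> r3 s = 0" unfolding r3_def by (simp_all add: dot_cross_self)
qed

lemma zpos:
  assumes s: "-1/2 \<le> s" "s < 0"
  shows "0 < (r1 s)$3" "0 < (r2 s)$3" "0 < (r3 s)$3"
proof -
  define c where "c = 1/sqrt (2::real)"
  define a where "a = sqrt (1/2 - s^2)"
  define i where "i = 1/(1+s)"
  have c: "c > 0" unfolding c_def by simp
  have D: "1 + s > 0" using s by simp
  have i: "i > 0" unfolding i_def using D by simp
  have "s^2 \<le> 1/4"
  proof -
    have "s^2 = (-s)^2" by simp
    also have "\<dots> \<le> (1/2)^2" using s by (intro power_mono) auto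
    finally show ?thesis by (simp add: power2_eq_square)
  qed
  then have a: "a > 0" unfolding a_def by simp
  have g: "0 < 1/2 + s + s^2"
  proof -
    have "0 \<le> (s + 1/2)^2" by simp
    then show ?thesis by (simp add: power2_eq_square algebra_simps)
  qed
  have R: "r1 s = vector [c, s, a]" "r2 s = vector [- ((1/2 + s) * i), c, c * a * i]"
    "r3 s = vector [- c * a * i, - a, (1/2 + s + s^2) * i]"
    using r_explicit[OF s] unfolding c_def a_def i_def by auto
  show "0 < (r1 s)$3" "0 < (r2 s)$3" "0 < (r3 s)$3" unfolding R using a c i g by simp_all
qed

lemma Rc_repr: obtains k s where "-1/2 \<le> s" "s < 0" "Rc t = (rotz^^k) (r1 s) \<or> Rc t = (rotz^^k) (r2 s) \<or> Rc t = (rotz^^k) (r3 s)"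
  using triple[of t] by metis

lemma Rc_z: "0 < (Rc t)$3"
proof -
  obtain k s where s: "-1/2 \<le> s" "s < 0" and "Rc t = (rotz^^k) (r1 s) \<or> Rc t = (rotz^^k) (r2 s) \<or> Rc t = (rotz^^k) (r3 s)"
    by (rule Rc_repr)
  then show ?thesis using zpos[OF s] by (auto simp: rotz_pow_z)
qed

lemma np_inner: "northpole \<bullet> v = v$3"
  by (subst (2) vec_eta) (simp add: northpole_def dot3)

lemma octant_alt: "octant t = {r \<in> sphere 0 1. 0 < r \<bullet> Rc t \<and> 0 < r \<bullet> Rc (t+1/3) \<and> 0 < r \<bullet> Rc (t+2/3)}"
  unfolding octant_def by auto

lemma not_in_oct: "Rc t' \<notin> octant t"
proof
  assume H: "Rc t' \<in> octant t"
  obtain k' s' where s': "-1/2 \<le> s'" "s' < 0" and v: "Rc t' = (rotz^^k') (r1 s') \<or> Rc t' = (rotz^^k') (r2 s') \<or> Rc t' = (rotz^^k') (r3 s')"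
    by (rule Rc_repr)
  then obtain v where vv: "v = r1 s' \<or> v = r2 s' \<or> v = r3 s'" and v': "Rc t' = (rotz^^k') v" by blast
  obtain k s where s: "-1/2 \<le> s" "s < 0" and tr:
    "(Rc t = (rotz^^k) (r1 s) \<and> Rc (t+1/3) = (rotz^^k) (r2 s) \<and> Rc (t+2/3) = (rotz^^k) (r3 s)) \<or>
     (Rc t = (rotz^^k) (r2 s) \<and> Rc (t+1/3) = (rotz^^k) (r3 s) \<and> Rc (t+2/3) = (rotz^^k) (r1 s)) \<or>
     (Rc t = (rotz^^k) (r3 s) \<and> Rc (t+1/3) = (rotz^^k) (r1 s) \<and> Rc (t+2/3) = (rotz^^k) (r2 s))"
    by (rule triple)
  have P: "0 < Rc t' \<bullet> Rc t" "0 < Rc t' \<bullet> Rc (t+1/3)" "0 < Rc t' \<bullet> Rc (t+2/3)"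
    using H unfolding octant_alt by auto
  have "0 < (rotz^^(k'+3* k)) v \<bullet> r1 s \<and> 0 < (rotz^^(k'+3* k)) v \<bullet> r2 s \<and> 0 < (rotz^^(k'+3* k)) v \<bullet> r3 s"
    using tr P unfolding v' by (auto simp: inner_shift)
  then show False using arc_out[OF s s' vv] by blast
qed

lemma conn_cone:
  fixes f :: "'b \<Rightarrow> real^3"
  assumes "S \<noteq> {}"
  shows "connected {r \<in> sphere 0 1. \<forall>x\<in>S. 0 < r \<bullet> f x}"
proof -
  define K where "K = {r::real^3. \<forall>x\<in>S. 0 < r \<bullet> f x}"
  have cK: "convex K" unfolding K_def convex_def
  proof (intro allI impI ballI CollectI, elim CollectE)
    fix x y :: "real^3" and u v :: real and z
    assume "\<forall>w\<in>S. 0 < x \<bullet> f w" "\<forall>w\<in>S. 0 < y \<bullet> f w" "0 \<le> u" "0 \<le> v" "u + v = 1" "z \<in> S"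
    then have "0 < x \<bullet> f z" "0 < y \<bullet> f z" "0 \<le> u" "0 \<le> v" "u + v = 1" by auto
    then have "0 < u * (x \<bullet> f z) + v * (y \<bullet> f z)"
      by (metis add.commute add_pos_nonneg add_nonneg_pos mult_nonneg_nonneg mult_pos_pos order_le_less zero_less_one less_imp_le mult_1 add_cancel_left_left)
    then show "0 < (u *\<^sub>R x + v *\<^sub>R y) \<bullet> f z" by (simp add: inner_add_left)
  qed
  have K0: "0 \<notin> K" using assms unfolding K_def by auto
  have cont: "continuous_on K (\<lambda>r. r /\<^sub>R norm r)"
    using K0 by (intro continuous_intros) auto
  have img: "(\<lambda>r. r /\<^sub>R norm r) ` K = {r \<in> sphere 0 1. \<forall>x\<in>S. 0 < r \<bullet> f x}"
  proof (intro equalityI subsetI)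
    fix y assume "y \<in> (\<lambda>r. r /\<^sub>R norm r) ` K"
    then obtain r where r: "r \<in> K" "y = r /\<^sub>R norm r" by blast
    then have n: "norm r > 0" using K0 by auto
    have "norm y = 1" using r n by simp
    moreover have "\<forall>x\<in>S. 0 < y \<bullet> f x" using r n unfolding K_def by auto
    ultimately show "y \<in> {r \<in> sphere 0 1. \<forall>x\<in>S. 0 < r \<bullet> f x}" by simp
  next
    fix y assume y: "y \<in> {r \<in> sphere 0 1. \<forall>x\<in>S. 0 < r \<bullet> f x}"
    then have "y \<in> K" "norm y = 1" unfolding K_def by auto
    then show "y \<in> (\<lambda>r. r /\<^sub>R norm r) ` K" by (metis (no_types, lifting) div_by_1 image_eqI scaleR_one inverse_1)
  qed
  show ?thesis unfolding img[symmetric]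
    by (rule connected_continuous_image[OF cont convex_connected[OF cK]])
qed

theorem lemma3p3:
  fixes t :: real
  shows "Rc t \<bullet> Rc (t + 1/3) = 0 \<and> Rc t \<bullet> Rc (t + 2/3) = 0 \<and>
         Rc (t + 1/3) \<bullet> Rc (t + 2/3) = 0 \<and> closure (octant t) \<subseteq> regionA"
proof (intro conjI)
  obtain k s where s: "-1/2 \<le> s" "s < 0" and tr:
    "(Rc t = (rotz^^k) (r1 s) \<and> Rc (t+1/3) = (rotz^^k) (r2 s) \<and> Rc (t+2/3) = (rotz^^k) (r3 s)) \<or>
     (Rc t = (rotz^^k) (r2 s) \<and> Rc (t+1/3) = (rotz^^k) (r3 s) \<and> Rc (t+2/3) = (rotz^^k) (r1 s)) \<or>
     (Rc t = (rotz^^k) (r3 s) \<and> Rc (t+1/3) = (rotz^^k) (r1 s) \<and> Rc (t+2/3) = (rotz^^k) (r2 s))"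
    by (rule triple)
  note o = orth[OF s]
  have o': "r2 s \<bullet> r1 s = 0" "r3 s \<bullet> r1 s = 0" "r3 s \<bullet> r2 s = 0" using o by (simp_all add: inner_commute)
  show "Rc t \<bullet> Rc (t + 1/3) = 0" "Rc t \<bullet> Rc (t + 2/3) = 0" "Rc (t + 1/3) \<bullet> Rc (t + 2/3) = 0"
    using tr o o' by (auto simp: rotz_pow_inner)
next
  define Oc where "Oc = octant t"
  have Osph: "Oc \<subseteq> sphere 0 1" unfolding Oc_def octant_def by auto
  have Oconn: "connected Oc"
    unfolding Oc_def octant_def by (rule conn_cone) simp
  have np: "northpole \<in> Oc"
  proof -
    have "norm northpole = 1" unfolding northpole_def
      by (simp add: norm_eq_sqrt_inner dot3)
    moreover have "\<forall>s\<in>{0, 1/3, 2/3}. northpole \<bullet> Rc (t + s) > 0" by (simp add: np_inner Rc_z)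
    ultimately show ?thesis unfolding Oc_def octant_def by simp
  qed
  have OG: "Oc \<inter> Gamma = {}" unfolding Oc_def Gamma_def using not_in_oct by auto
  show "closure (octant t) \<subseteq> regionA"
  proof
    fix x assume x: "x \<in> closure (octant t)"
    show "x \<in> regionA"
    proof (cases "x \<in> Gamma")
      case True then show ?thesis unfolding regionA_def by simp
    next
      case False
      have "closure Oc \<subseteq> sphere 0 1" using closure_mono[OF Osph] by simp
      then have xs: "x \<in> sphere 0 1" using x unfolding Oc_def by blast
      have T1: "Oc \<subseteq> insert x Oc" by auto
      have T2: "insert x Oc \<subseteq> closure Oc" using x closure_subset unfolding Oc_def by auto
      have cT: "connected (insert x Oc)" by (rule connected_intermediate_closure[OF Oconn T1 T2])
      have T3: "insert x Oc \<subseteq> sphere 0 1 - Gamma" using xs False Osph OG by auto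
      have "insert x Oc \<subseteq> connected_component_set (sphere 0 1 - Gamma) northpole"
        by (rule connected_component_maximal) (use np cT T3 in auto)
      then show ?thesis unfolding regionA_def by auto
    qed
  qed
qed


end
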